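(* For every ordinal $\alpha\geq2$, the varieties $TA_\alpha$ and $SA_\alpha$ have the superamalgamation property: for all $\mathfrak A_0,\mathfrak A_1,\mathfrak A_2$ in the variety and monomorphisms $i_1:\mathfrak A_0\to\mathfrak A_1$, $i_2:\mathfrak A_0\to\mathfrak A_2$ there are $\mathfrak D$ in the variety and monomorphisms $m_1:\mathfrak A_1\to\mathfrak D$, $m_2:\mathfrak A_2\to\mathfrak D$ with $m_1\circ i_1=m_2\circ i_2$ such that, for $\{j,k\}=\{1,2\}$, $x\in A_j$, $y\in A_k$ with $m_j(x)\leq m_k(y)$, there is $z\in A_0$ with $x\leq i_j(z)$ and $i_k(z)\leq y$.
   Context: $TA_\alpha=\mathbf{Mod}(\Sigma_\alpha)$: Boolean algebras with operators $s_{ij}$ ($i\neq j<\alpha$) that are Boolean endomorphisms satisfying $t_1(x)=t_2(x)$ for all finite words $t_1,t_2$ in the $s_{ij}$ whose associated compositions of transpositions $[i,j]$ coincide. $SA_\alpha=\mathbf{Mod}(\Sigma'_\alpha)$: Boolean algebras with Boolean-endomorphism operators $s^i_j,s_{ij}$ ($i\neq j<\alpha$) satisfying $t_1(x)=t_2(x)$ whenever the associated maps $\alpha\to\alpha$ coincide, where $s_{ij}t\mapsto[i,j]\circ\hat t$, $s^i_jt\mapsto[i/j]\circ\hat t$, the empty word $\mapsto Id_\alpha$, and $[i/j]$ sends $i$ to $j$ and fixes the rest. *)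

theory Defs
  imports Main
begin

text \<open>Operator labels: Swap i j stands for s_ij, Subst i j stands for s^i_j.\<close>
datatype 'i opl = Swap 'i 'i | Subst 'i 'i

record 'a bool_alg =
  carrier :: "'a set"
  join :: "'a \<Rightarrow> 'a \<Rightarrow> 'a"
  meet :: "'a \<Rightarrow> 'a \<Rightarrow> 'a"
  compl :: "'a \<Rightarrow> 'a"
  zero :: 'a
  one :: 'a

record ('a, 'i) sba = "'a bool_alg" +
  ops :: "'i opl \<Rightarrow> 'a \<Rightarrow> 'a"

definition is_BA :: "('a, 'b) bool_alg_scheme \<Rightarrow> bool" where
  "is_BA A \<longleftrightarrow>
     zero A \<in> carrier A \<and> one A \<in> carrier A \<and>
     (\<forall>x\<in>carrier A. \<forall>y\<in>carrier A. join A x y \<in> carrier A \<and> meet A x y \<in> carrier A) \<and>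
     (\<forall>x\<in>carrier A. compl A x \<in> carrier A) \<and>
     (\<forall>x\<in>carrier A. \<forall>y\<in>carrier A. join A x y = join A y x \<and> meet A x y = meet A y x) \<and>
     (\<forall>x\<in>carrier A. \<forall>y\<in>carrier A. \<forall>z\<in>carrier A.
        join A x (join A y z) = join A (join A x y) z \<and>
        meet A x (meet A y z) = meet A (meet A x y) z \<and>
        meet A x (join A y z) = join A (meet A x y) (meet A x z) \<and>
        join A x (meet A y z) = meet A (join A x y) (join A x z)) \<and>
     (\<forall>x\<in>carrier A. \<forall>y\<in>carrier A. join A x (meet A x y) = x \<and> meet A x (join A x y) = x) \<and>
     (\<forall>x\<in>carrier A. join A x (zero A) = x \<and> meet A x (one A) = x) \<and>
     (\<forall>x\<in>carrier A. join A x (compl A x) = one A \<and> meet A x (compl A x) = zero A)"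

definition ba_le :: "('a, 'b) bool_alg_scheme \<Rightarrow> 'a \<Rightarrow> 'a \<Rightarrow> bool" where
  "ba_le A x y \<longleftrightarrow> meet A x y = x"

definition transp_idx :: "'i \<Rightarrow> 'i \<Rightarrow> 'i \<Rightarrow> 'i" where
  "transp_idx i j k = (if k = i then j else if k = j then i else k)"

definition repl_idx :: "'i \<Rightarrow> 'i \<Rightarrow> 'i \<Rightarrow> 'i" where
  "repl_idx i j k = (if k = i then j else k)"

fun word_map :: "'i opl list \<Rightarrow> 'i \<Rightarrow> 'i" where
  "word_map [] = id"
| "word_map (Swap i j # t) = transp_idx i j \<circ> word_map t"
| "word_map (Subst i j # t) = repl_idx i j \<circ> word_map t"

fun eval_word :: "('a, 'i, 'b) sba_scheme \<Rightarrow> 'i opl list \<Rightarrow> 'a \<Rightarrow> 'a" where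
  "eval_word A [] x = x"
| "eval_word A (p # t) x = ops A p (eval_word A t x)"

definition ops_TA :: "'i::wellorder \<Rightarrow> 'i opl set" where
  "ops_TA \<alpha> = {Swap i j | i j. i \<noteq> j \<and> i < \<alpha> \<and> j < \<alpha>}"

definition ops_SA :: "'i::wellorder \<Rightarrow> 'i opl set" where
  "ops_SA \<alpha> = {Swap i j | i j. i \<noteq> j \<and> i < \<alpha> \<and> j < \<alpha>}
              \<union> {Subst i j | i j. i \<noteq> j \<and> i < \<alpha> \<and> j < \<alpha>}"

definition is_BA_endo :: "('a, 'b) bool_alg_scheme \<Rightarrow> ('a \<Rightarrow> 'a) \<Rightarrow> bool" where
  "is_BA_endo A f \<longleftrightarrow>
     (\<forall>x\<in>carrier A. f x \<in> carrier A) \<and>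
     (\<forall>x\<in>carrier A. \<forall>y\<in>carrier A. f (join A x y) = join A (f x) (f y) \<and>
                                     f (meet A x y) = meet A (f x) (f y)) \<and>
     (\<forall>x\<in>carrier A. f (compl A x) = compl A (f x)) \<and>
     f (zero A) = zero A \<and> f (one A) = one A"

definition in_variety :: "'i::wellorder \<Rightarrow> 'i opl set \<Rightarrow> ('a, 'i, 'b) sba_scheme \<Rightarrow> bool" where
  "in_variety \<alpha> Ops A \<longleftrightarrow>
     is_BA A \<and>
     (\<forall>p\<in>Ops. is_BA_endo A (ops A p)) \<and>
     (\<forall>t1 t2. set t1 \<subseteq> Ops \<longrightarrow> set t2 \<subseteq> Ops \<longrightarrow>
        (\<forall>k. k < \<alpha> \<longrightarrow> word_map t1 k = word_map t2 k) \<longrightarrow>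
        (\<forall>x\<in>carrier A. eval_word A t1 x = eval_word A t2 x))"

definition TA :: "'i::wellorder \<Rightarrow> ('a, 'i, 'b) sba_scheme \<Rightarrow> bool" where
  "TA \<alpha> A \<longleftrightarrow> in_variety \<alpha> (ops_TA \<alpha>) A"

definition SA :: "'i::wellorder \<Rightarrow> ('a, 'i, 'b) sba_scheme \<Rightarrow> bool" where
  "SA \<alpha> A \<longleftrightarrow> in_variety \<alpha> (ops_SA \<alpha>) A"

definition is_hom :: "'i opl set \<Rightarrow> ('a, 'i, 'x) sba_scheme \<Rightarrow> ('b, 'i, 'y) sba_scheme
                      \<Rightarrow> ('a \<Rightarrow> 'b) \<Rightarrow> bool" where
  "is_hom Ops A B h \<longleftrightarrow>
     (\<forall>x\<in>carrier A. h x \<in> carrier B) \<and>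
     (\<forall>x\<in>carrier A. \<forall>y\<in>carrier A. h (join A x y) = join B (h x) (h y) \<and>
                                     h (meet A x y) = meet B (h x) (h y)) \<and>
     (\<forall>x\<in>carrier A. h (compl A x) = compl B (h x)) \<and>
     h (zero A) = zero B \<and> h (one A) = one B \<and>
     (\<forall>p\<in>Ops. \<forall>x\<in>carrier A. h (ops A p x) = ops B p (h x))"

definition is_mono :: "'i opl set \<Rightarrow> ('a, 'i, 'x) sba_scheme \<Rightarrow> ('b, 'i, 'y) sba_scheme
                       \<Rightarrow> ('a \<Rightarrow> 'b) \<Rightarrow> bool" where
  "is_mono Ops A B h \<longleftrightarrow> is_hom Ops A B h \<and> inj_on h (carrier A)"

text \<open>The amalgam D is taken in the type ('b + 'c + 'i) list, which is large enough to
  carry (an isomorphic copy of) the subalgebra generated by the images of A1 and A2.\<close>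
definition superamalgamation ::
  "'i::wellorder \<Rightarrow> 'i opl set \<Rightarrow> 'a itself \<Rightarrow> 'b itself \<Rightarrow> 'c itself \<Rightarrow> bool" where
  "superamalgamation \<alpha> Ops (_ :: 'a itself) (_ :: 'b itself) (_ :: 'c itself) \<longleftrightarrow>
    (\<forall>(A0 :: ('a, 'i) sba) (A1 :: ('b, 'i) sba) (A2 :: ('c, 'i) sba) i1 i2.
      in_variety \<alpha> Ops A0 \<longrightarrow> in_variety \<alpha> Ops A1 \<longrightarrow> in_variety \<alpha> Ops A2 \<longrightarrow>
      is_mono Ops A0 A1 i1 \<longrightarrow> is_mono Ops A0 A2 i2 \<longrightarrow>
      (\<exists>(D :: (('b + 'c + 'i) list, 'i) sba) m1 m2.
         in_variety \<alpha> Ops D \<and> is_mono Ops A1 D m1 \<and> is_mono Ops A2 D m2 \<and>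
         (\<forall>a\<in>carrier A0. m1 (i1 a) = m2 (i2 a)) \<and>
         (\<forall>x\<in>carrier A1. \<forall>y\<in>carrier A2. ba_le D (m1 x) (m2 y) \<longrightarrow>
            (\<exists>z\<in>carrier A0. ba_le A1 x (i1 z) \<and> ba_le A2 (i2 z) y)) \<and>
         (\<forall>x\<in>carrier A2. \<forall>y\<in>carrier A1. ba_le D (m2 x) (m1 y) \<longrightarrow>
            (\<exists>z\<in>carrier A0. ba_le A2 x (i2 z) \<and> ba_le A1 (i1 z) y))))"

end

theory Submission
  imports Defs
begin

locale ba = fixes A :: "('a,'b) bool_alg_scheme" assumes BA: "is_BA A"
begin
lemmas BA' = BA[unfolded is_BA_def]
lemma zc[simp]: "zero A \<in> carrier A" using BA' by blast
lemma oc[simp]: "one A \<in> carrier A" using BA' by blast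
lemma jc[simp]: "x \<in> carrier A \<Longrightarrow> y \<in> carrier A \<Longrightarrow> join A x y \<in> carrier A" using BA' by blast
lemma mc[simp]: "x \<in> carrier A \<Longrightarrow> y \<in> carrier A \<Longrightarrow> meet A x y \<in> carrier A" using BA' by blast
lemma cc[simp]: "x \<in> carrier A \<Longrightarrow> compl A x \<in> carrier A" using BA' by blast
lemma jcomm: "x \<in> carrier A \<Longrightarrow> y \<in> carrier A \<Longrightarrow> join A x y = join A y x" using BA' by blast
lemma mcomm: "x \<in> carrier A \<Longrightarrow> y \<in> carrier A \<Longrightarrow> meet A x y = meet A y x" using BA' by blast
lemma jassoc: "x \<in> carrier A \<Longrightarrow> y \<in> carrier A \<Longrightarrow> w \<in> carrier A \<Longrightarrow> join A x (join A y w) = join A (join A x y) w" using BA' by blast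
lemma massoc: "x \<in> carrier A \<Longrightarrow> y \<in> carrier A \<Longrightarrow> w \<in> carrier A \<Longrightarrow> meet A x (meet A y w) = meet A (meet A x y) w" using BA' by blast
lemma mjd: "x \<in> carrier A \<Longrightarrow> y \<in> carrier A \<Longrightarrow> w \<in> carrier A \<Longrightarrow> meet A x (join A y w) = join A (meet A x y) (meet A x w)" using BA' by blast
lemma abs1: "x \<in> carrier A \<Longrightarrow> y \<in> carrier A \<Longrightarrow> join A x (meet A x y) = x" using BA' by blast
lemma abs2: "x \<in> carrier A \<Longrightarrow> y \<in> carrier A \<Longrightarrow> meet A x (join A x y) = x" using BA' by blast
lemma jz[simp]: "x \<in> carrier A \<Longrightarrow> join A x (zero A) = x" using BA' by blast
lemma mo[simp]: "x \<in> carrier A \<Longrightarrow> meet A x (one A) = x" using BA' by blast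
lemma jcompl[simp]: "x \<in> carrier A \<Longrightarrow> join A x (compl A x) = one A" using BA' by blast
lemma mcompl[simp]: "x \<in> carrier A \<Longrightarrow> meet A x (compl A x) = zero A" using BA' by blast

lemma midem[simp]: assumes "x \<in> carrier A" shows "meet A x x = x"
proof -
  have 1: "join A x (meet A x x) = x" using assms abs1[of x x] by simp
  have "meet A x (join A x (meet A x x)) = x" using assms abs2[of x "meet A x x"] by simp
  thus ?thesis unfolding 1 .
qed
lemma mz[simp]: assumes "x \<in> carrier A" shows "meet A x (zero A) = zero A"
proof -
  have "meet A x (meet A x (compl A x)) = meet A (meet A x x) (compl A x)" using assms massoc[of x x "compl A x"] by simp
  thus ?thesis using assms by simp
qed
lemma zm[simp]: "x \<in> carrier A \<Longrightarrow> meet A (zero A) x = zero A"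
  using mcomm[of "zero A" x] by simp
lemma zj[simp]: "x \<in> carrier A \<Longrightarrow> join A (zero A) x = x"
  using jcomm[of "zero A" x] by simp
lemma om[simp]: "x \<in> carrier A \<Longrightarrow> meet A (one A) x = x"
  using mcomm[of "one A" x] by simp

lemma le_meet1: "x \<in> carrier A \<Longrightarrow> y \<in> carrier A \<Longrightarrow> ba_le A (meet A x y) x"
  unfolding ba_le_def using mcomm[of "meet A x y" x] massoc[of x x y] by simp
lemma le_meet2: "x \<in> carrier A \<Longrightarrow> y \<in> carrier A \<Longrightarrow> ba_le A (meet A x y) y"
  unfolding ba_le_def using massoc[of x y y] by simp
lemma le_join1: "x \<in> carrier A \<Longrightarrow> y \<in> carrier A \<Longrightarrow> ba_le A x (join A x y)"
  unfolding ba_le_def by (simp add: abs2)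
lemma le_join2: "x \<in> carrier A \<Longrightarrow> y \<in> carrier A \<Longrightarrow> ba_le A y (join A x y)"
  unfolding ba_le_def using abs2[of y x] jcomm[of x y] by simp
lemma le_trans: "x \<in> carrier A \<Longrightarrow> y \<in> carrier A \<Longrightarrow> w \<in> carrier A \<Longrightarrow> ba_le A x y \<Longrightarrow> ba_le A y w \<Longrightarrow> ba_le A x w"
  unfolding ba_le_def using massoc[of x y w] by simp
lemma le_meetI: "x \<in> carrier A \<Longrightarrow> y \<in> carrier A \<Longrightarrow> w \<in> carrier A \<Longrightarrow> ba_le A x y \<Longrightarrow> ba_le A x w \<Longrightarrow> ba_le A x (meet A y w)"
  unfolding ba_le_def using massoc[of x y w] by simp
lemma le_antisym: "x \<in> carrier A \<Longrightarrow> y \<in> carrier A \<Longrightarrow> ba_le A x y \<Longrightarrow> ba_le A y x \<Longrightarrow> x = y"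
  unfolding ba_le_def using mcomm[of x y] by simp
lemma le_one: "x \<in> carrier A \<Longrightarrow> ba_le A x (one A)"
  unfolding ba_le_def by simp
lemma le_zero: "x \<in> carrier A \<Longrightarrow> ba_le A x (zero A) \<Longrightarrow> x = zero A"
  unfolding ba_le_def by simp
lemma le_refl: "x \<in> carrier A \<Longrightarrow> ba_le A x x"
  unfolding ba_le_def by simp

lemma meet0_le: assumes "x \<in> carrier A" "y \<in> carrier A" "meet A x (compl A y) = zero A"
  shows "ba_le A x y"
proof -
  have "meet A x (join A y (compl A y)) = join A (meet A x y) (meet A x (compl A y))"
    using assms by (intro mjd) auto
  moreover have "meet A x (join A y (compl A y)) = x" using assms by simp
  moreover have "join A (meet A x y) (meet A x (compl A y)) = meet A x y" using assms by simp
  ultimately show ?thesis unfolding ba_le_def by simp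
qed

lemma meet0_lec: assumes "x \<in> carrier A" "y \<in> carrier A" "meet A x y = zero A"
  shows "ba_le A x (compl A y)"
proof -
  have "meet A x (join A y (compl A y)) = join A (meet A x y) (meet A x (compl A y))"
    using assms by (intro mjd) auto
  moreover have "meet A x (join A y (compl A y)) = x" using assms by simp
  moreover have "join A (meet A x y) (meet A x (compl A y)) = meet A x (compl A y)" using assms by simp
  ultimately show ?thesis unfolding ba_le_def by simp
qed

lemma join_compls_zero: assumes "x \<in> carrier A" "y \<in> carrier A"
  shows "meet A (join A x y) (meet A (compl A x) (compl A y)) = zero A"
proof -
  let ?w = "meet A (compl A x) (compl A y)"
  have w: "?w \<in> carrier A" using assms by simp
  have "meet A (join A x y) ?w = meet A ?w (join A x y)" using assms w mcomm[of "join A x y" ?w] by simp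
  also have "\<dots> = join A (meet A ?w x) (meet A ?w y)" using assms w mjd[of ?w x y] by simp
  also have "meet A ?w x = zero A"
    using assms mcomm[of ?w x] massoc[of x "compl A x" "compl A y"] by simp
  also have "meet A ?w y = zero A"
    using assms massoc[of "compl A x" "compl A y" y, symmetric] mcomm[of "compl A y" y] by simp
  finally show ?thesis using assms by simp
qed

lemma le_meet_mono: "x \<in> carrier A \<Longrightarrow> p \<in> carrier A \<Longrightarrow> q \<in> carrier A \<Longrightarrow> ba_le A (meet A x (meet A p q)) (meet A x p)"
  using le_meet1[of "meet A x p" q] massoc[of x p q] by simp
lemma le_meet_mono2: "x \<in> carrier A \<Longrightarrow> p \<in> carrier A \<Longrightarrow> q \<in> carrier A \<Longrightarrow> ba_le A (meet A x (meet A p q)) (meet A x q)"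
  using le_meet_mono[of x q p] mcomm[of p q] by simp


lemma le_meet_monoL: assumes "a \<in> carrier A" "b \<in> carrier A" "d \<in> carrier A" "ba_le A a b"
  shows "ba_le A (meet A a d) (meet A b d)"
proof -
  have e1: "meet A (meet A a d) (meet A b d) = meet A a (meet A d (meet A b d))"
    using assms massoc[of a d "meet A b d"] by simp
  have e2: "meet A d (meet A b d) = meet A b d"
    using assms mcomm[of b d] massoc[of d d b] by simp
  have e3: "meet A a (meet A b d) = meet A a d"
    using assms massoc[of a b d] unfolding ba_le_def by simp
  show ?thesis unfolding ba_le_def e1 e2 e3 ..
qed

end



definition uf :: "('a,'b) bool_alg_scheme \<Rightarrow> 'a set \<Rightarrow> bool" where
  "uf A u \<longleftrightarrow> u \<subseteq> carrier A \<and> zero A \<notin> u \<and> one A \<in> u \<and>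
     (\<forall>x\<in>carrier A. \<forall>y\<in>carrier A. (join A x y \<in> u \<longleftrightarrow> x \<in> u \<or> y \<in> u) \<and>
         (meet A x y \<in> u \<longleftrightarrow> x \<in> u \<and> y \<in> u)) \<and>
     (\<forall>x\<in>carrier A. compl A x \<in> u \<longleftrightarrow> x \<notin> u)"

definition filt :: "('a,'b) bool_alg_scheme \<Rightarrow> 'a set \<Rightarrow> bool" where
  "filt A F \<longleftrightarrow> F \<subseteq> carrier A \<and> one A \<in> F \<and> (\<forall>x\<in>F. \<forall>y\<in>F. meet A x y \<in> F) \<and>
     (\<forall>x\<in>F. \<forall>y\<in>carrier A. ba_le A x y \<longrightarrow> y \<in> F)"

lemma ufD: assumes "uf A u"
  shows "u \<subseteq> carrier A" "zero A \<notin> u" "one A \<in> u"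
   "\<And>x y. x\<in>carrier A \<Longrightarrow> y\<in>carrier A \<Longrightarrow> join A x y \<in> u \<longleftrightarrow> x \<in> u \<or> y \<in> u"
   "\<And>x y. x\<in>carrier A \<Longrightarrow> y\<in>carrier A \<Longrightarrow> meet A x y \<in> u \<longleftrightarrow> x \<in> u \<and> y \<in> u"
   "\<And>x. x\<in>carrier A \<Longrightarrow> compl A x \<in> u \<longleftrightarrow> x \<notin> u"
  using assms unfolding uf_def by blast+

context ba begin

lemma uf_up: assumes "uf A u" "x \<in> u" "y \<in> carrier A" "ba_le A x y" shows "y \<in> u"
proof -
  have xC: "x \<in> carrier A" using ufD(1)[OF assms(1)] assms(2) by auto
  have "meet A x y \<in> u" using assms(2,4) unfolding ba_le_def by simp
  thus ?thesis using ufD(5)[OF assms(1) xC assms(3)] by simp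
qed

lemma maximal_uf:
  assumes f: "filt A M" and z: "zero A \<notin> M"
    and max: "\<And>F. filt A F \<Longrightarrow> zero A \<notin> F \<Longrightarrow> M \<subseteq> F \<Longrightarrow> F = M"
  shows "uf A M"
proof -
  have MC: "M \<subseteq> carrier A" and o: "one A \<in> M" and mm: "\<And>x y. x\<in>M \<Longrightarrow> y\<in>M \<Longrightarrow> meet A x y \<in> M"
    and up: "\<And>x y. x\<in>M \<Longrightarrow> y\<in>carrier A \<Longrightarrow> ba_le A x y \<Longrightarrow> y \<in> M"
    using f unfolding filt_def by blast+
  have meetiff: "meet A x y \<in> M \<longleftrightarrow> x \<in> M \<and> y \<in> M" if "x \<in> carrier A" "y \<in> carrier A" for x y
    using that mm up[of "meet A x y" x] up[of "meet A x y" y] le_meet1[of x y] le_meet2[of x y] by auto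
  have notboth: "\<not> (x \<in> M \<and> compl A x \<in> M)" if "x \<in> carrier A" for x
    using that mm[of x "compl A x"] z by auto
  have oneof: "x \<in> M \<or> compl A x \<in> M" if x: "x \<in> carrier A" for x
  proof (rule ccontr)
    assume nx: "\<not> (x \<in> M \<or> compl A x \<in> M)"
    define M' where "M' = {y \<in> carrier A. \<exists>g\<in>M. ba_le A (meet A g x) y}"
    have gC: "g \<in> M \<Longrightarrow> g \<in> carrier A" for g using MC by auto
    have "filt A M'"
      unfolding filt_def
    proof (intro conjI ballI impI)
      show "M' \<subseteq> carrier A" unfolding M'_def by auto
      show "one A \<in> M'" unfolding M'_def using o x gC by (auto intro!: bexI[of _ "one A"] le_one)
      fix a b assume a: "a \<in> M'" and b: "b \<in> M'"
      then obtain g g' where g: "g \<in> M" "ba_le A (meet A g x) a" and g': "g' \<in> M" "ba_le A (meet A g' x) b"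
        and aC: "a \<in> carrier A" and bC: "b \<in> carrier A" unfolding M'_def by auto
      have gg: "meet A g g' \<in> M" using mm g g' by auto
      have 1: "ba_le A (meet A (meet A g g') x) (meet A g x)"
        using le_meet_monoL[of "meet A g g'" g x] le_meet1[of g g'] gC g g' x by auto
      have 2: "ba_le A (meet A (meet A g g') x) (meet A g' x)"
        using le_meet_monoL[of "meet A g g'" g' x] le_meet2[of g g'] gC g g' x by auto
      have "ba_le A (meet A (meet A g g') x) (meet A a b)"
      proof (rule le_meetI)
        have ggC: "meet A g g' \<in> carrier A" using gg gC by auto
        show "ba_le A (meet A (meet A g g') x) a"
          using le_trans[OF _ _ _ 1 g(2)] ggC gC g g' x aC by simp
        show "ba_le A (meet A (meet A g g') x) b"
          using le_trans[OF _ _ _ 2 g'(2)] ggC gC g g' x bC by simp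
      qed (use gg gC x aC bC in auto)
      thus "meet A a b \<in> M'" unfolding M'_def using gg aC bC by auto
    next
      fix a b assume "a \<in> M'" "b \<in> carrier A" "ba_le A a b"
      then obtain g where "g \<in> M" "ba_le A (meet A g x) a" "a \<in> carrier A" "b \<in> carrier A" "ba_le A a b"
        unfolding M'_def by auto
      moreover have "ba_le A (meet A g x) b"
        by (rule le_trans[of _ a]) (use calculation gC x in auto)
      ultimately show "b \<in> M'" unfolding M'_def by auto
    qed
    moreover have "M \<subseteq> M'" unfolding M'_def using MC x le_meet1[of _ x] by auto
    moreover have "x \<in> M'" unfolding M'_def using o x le_refl[of x] by (auto intro!: bexI[of _ "one A"])
    ultimately have "zero A \<in> M'" using max nx by blast
    then obtain g where g: "g \<in> M" "ba_le A (meet A g x) (zero A)" unfolding M'_def by auto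
    hence "meet A g x = zero A" using le_zero[of "meet A g x"] gC x by auto
    hence "ba_le A g (compl A x)" using meet0_lec[of g x] gC g x by auto
    hence "compl A x \<in> M" using up[of g "compl A x"] g x by auto
    thus False using nx by auto
  qed
  have compliff: "compl A x \<in> M \<longleftrightarrow> x \<notin> M" if "x \<in> carrier A" for x
    using notboth[OF that] oneof[OF that] by blast
  have joiniff: "join A x y \<in> M \<longleftrightarrow> x \<in> M \<or> y \<in> M" if x: "x \<in> carrier A" and y: "y \<in> carrier A" for x y
  proof
    assume j: "join A x y \<in> M"
    show "x \<in> M \<or> y \<in> M"
    proof (rule ccontr)
      assume "\<not> (x \<in> M \<or> y \<in> M)"
      hence "meet A (compl A x) (compl A y) \<in> M" using compliff x y mm by auto
      hence "meet A (join A x y) (meet A (compl A x) (compl A y)) \<in> M" using mm j by auto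
      thus False using join_compls_zero[OF x y] z by auto
    qed
  next
    assume "x \<in> M \<or> y \<in> M"
    thus "join A x y \<in> M" using up le_join1[OF x y] le_join2[OF x y] x y by auto
  qed
  show ?thesis unfolding uf_def using MC z o meetiff compliff joiniff by blast
qed

lemma uf_exists:
  assumes GC: "G \<subseteq> carrier A" and ne: "G \<noteq> {}" and z: "zero A \<notin> G"
    and dir: "\<And>g1 g2. g1 \<in> G \<Longrightarrow> g2 \<in> G \<Longrightarrow> \<exists>g\<in>G. ba_le A g g1 \<and> ba_le A g g2"
  shows "\<exists>u. uf A u \<and> G \<subseteq> u"
proof -
  define F0 where "F0 = {y \<in> carrier A. \<exists>g\<in>G. ba_le A g y}"
  have "filt A F0" unfolding filt_def
  proof (intro conjI ballI impI)
    show "F0 \<subseteq> carrier A" unfolding F0_def by auto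
    obtain g where "g \<in> G" using ne by auto
    thus "one A \<in> F0" unfolding F0_def using GC le_one[of g] by auto
    fix a b assume "a \<in> F0" "b \<in> F0"
    then obtain g1 g2 where "g1 \<in> G" "ba_le A g1 a" "g2 \<in> G" "ba_le A g2 b" "a \<in> carrier A" "b \<in> carrier A"
      unfolding F0_def by auto
    moreover from this obtain g where "g \<in> G" "ba_le A g g1" "ba_le A g g2" using dir by blast
    moreover have "ba_le A g a" by (rule le_trans[of _ g1]) (use calculation GC in auto)
    moreover have "ba_le A g b" by (rule le_trans[of _ g2]) (use calculation GC in auto)
    moreover have "ba_le A g (meet A a b)" by (rule le_meetI) (use calculation GC in auto)
    ultimately show "meet A a b \<in> F0" unfolding F0_def using GC by auto
  next
    fix a b assume "a \<in> F0" "b \<in> carrier A" "ba_le A a b"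
    then obtain g where "g \<in> G" "ba_le A g a" "a \<in> carrier A" "b \<in> carrier A" "ba_le A a b"
      unfolding F0_def by auto
    moreover have "ba_le A g b" by (rule le_trans[of _ a]) (use calculation GC in auto)
    ultimately show "b \<in> F0" unfolding F0_def by auto
  qed
  have z0: "zero A \<notin> F0" unfolding F0_def using z GC le_zero by blast
  have GF: "G \<subseteq> F0" unfolding F0_def using GC le_refl by blast
  define S where "S = {F. filt A F \<and> zero A \<notin> F \<and> F0 \<subseteq> F}"
  have "S \<noteq> {}" using \<open>filt A F0\<close> z0 unfolding S_def by auto
  moreover have "\<Union>\<C> \<in> S" if cne: "\<C> \<noteq> {}" and ch: "subset.chain S \<C>" for \<C>
  proof -
    have CS: "\<C> \<subseteq> S" and lin: "\<And>X Y. X \<in> \<C> \<Longrightarrow> Y \<in> \<C> \<Longrightarrow> X \<subseteq> Y \<or> Y \<subseteq> X"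
      using ch unfolding subset.chain_def by auto
    have fX: "\<And>X. X \<in> \<C> \<Longrightarrow> filt A X \<and> zero A \<notin> X \<and> F0 \<subseteq> X" using CS unfolding S_def by auto
    have fC: "X \<subseteq> carrier A" "one A \<in> X" "\<And>a b. a \<in> X \<Longrightarrow> b \<in> X \<Longrightarrow> meet A a b \<in> X"
      "\<And>a b. a \<in> X \<Longrightarrow> b \<in> carrier A \<Longrightarrow> ba_le A a b \<Longrightarrow> b \<in> X" if "X \<in> \<C>" for X
      using fX[OF that] unfolding filt_def by auto
    have "filt A (\<Union>\<C>)" unfolding filt_def
    proof (intro conjI ballI impI)
      show "\<Union>\<C> \<subseteq> carrier A" using fC(1) by blast
      show "one A \<in> \<Union>\<C>" using fC(2) cne by blast
      fix a b assume "a \<in> \<Union>\<C>" "b \<in> \<Union>\<C>"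
      then obtain X Y where XY: "X \<in> \<C>" "Y \<in> \<C>" "a \<in> X" "b \<in> Y" by auto
      show "meet A a b \<in> \<Union>\<C>"
      proof (cases "X \<subseteq> Y")
        case True thus ?thesis using fC(3)[of Y a b] XY by blast
      next
        case False hence "Y \<subseteq> X" using lin XY by blast
        thus ?thesis using fC(3)[of X a b] XY by blast
      qed
    next
      fix a b assume "a \<in> \<Union>\<C>" "b \<in> carrier A" "ba_le A a b"
      then obtain X where "X \<in> \<C>" "a \<in> X" by auto
      thus "b \<in> \<Union>\<C>" using fC(4)[of X a b] \<open>b \<in> carrier A\<close> \<open>ba_le A a b\<close> by blast
    qed
    moreover have "zero A \<notin> \<Union>\<C>" using fX by blast
    moreover have "F0 \<subseteq> \<Union>\<C>" using fX cne by blast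
    ultimately show ?thesis unfolding S_def by auto
  qed
  ultimately obtain M where M: "M \<in> S" and mx: "\<And>X. X \<in> S \<Longrightarrow> M \<subseteq> X \<Longrightarrow> X = M"
    using subset_Zorn_nonempty[of S] by blast
  have "uf A M"
    by (rule maximal_uf) (use M mx in \<open>auto simp: S_def\<close>)
  moreover have "G \<subseteq> M" using M GF unfolding S_def by auto
  ultimately show ?thesis by auto
qed

end



definition bhom :: "('a,'x) bool_alg_scheme \<Rightarrow> ('b,'y) bool_alg_scheme \<Rightarrow> ('a \<Rightarrow> 'b) \<Rightarrow> bool" where
  "bhom A B h \<longleftrightarrow> (\<forall>x\<in>carrier A. h x \<in> carrier B) \<and>
     (\<forall>x\<in>carrier A. \<forall>y\<in>carrier A. h (join A x y) = join B (h x) (h y) \<and>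
                                     h (meet A x y) = meet B (h x) (h y)) \<and>
     (\<forall>x\<in>carrier A. h (compl A x) = compl B (h x)) \<and>
     h (zero A) = zero B \<and> h (one A) = one B"

lemma bhomD: assumes "bhom A B h"
  shows "\<And>x. x\<in>carrier A \<Longrightarrow> h x \<in> carrier B"
    "\<And>x y. x\<in>carrier A \<Longrightarrow> y\<in>carrier A \<Longrightarrow> h (join A x y) = join B (h x) (h y)"
    "\<And>x y. x\<in>carrier A \<Longrightarrow> y\<in>carrier A \<Longrightarrow> h (meet A x y) = meet B (h x) (h y)"
    "\<And>x. x\<in>carrier A \<Longrightarrow> h (compl A x) = compl B (h x)"
    "h (zero A) = zero B" "h (one A) = one B"
  using assms unfolding bhom_def by auto

lemma uf_preimage: assumes "is_BA A" "bhom A B h" "uf B u" shows "uf A {a \<in> carrier A. h a \<in> u}"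
proof -
  interpret ba A using assms(1) by (simp add: ba_def)
  show ?thesis using ufD[OF assms(3)] bhomD[OF assms(2)] unfolding uf_def by auto
qed

context ba begin

lemma uf_extend:
  assumes i: "bhom A0 A i" and w: "uf A0 w" and x: "x \<in> carrier A"
    and nz: "\<And>a. a \<in> w \<Longrightarrow> meet A x (i a) \<noteq> zero A"
  shows "\<exists>u. uf A u \<and> x \<in> u \<and> (\<forall>a\<in>carrier A0. i a \<in> u \<longleftrightarrow> a \<in> w)"
proof -
  note wD = ufD[OF w] and iD = bhomD[OF i]
  have wC: "a \<in> w \<Longrightarrow> a \<in> carrier A0" for a using wD(1) by auto
  define G where "G = {meet A x (i a) | a. a \<in> w}"
  have GC: "G \<subseteq> carrier A" unfolding G_def using x iD(1) wC by auto
  have ne: "G \<noteq> {}" unfolding G_def using wD(3) by auto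
  have z: "zero A \<notin> G"
  proof
    assume "zero A \<in> G"
    then obtain a where "a \<in> w" "zero A = meet A x (i a)" unfolding G_def by auto
    thus False using nz by metis
  qed
  have dir: "\<exists>g\<in>G. ba_le A g g1 \<and> ba_le A g g2" if gg: "g1 \<in> G" "g2 \<in> G" for g1 g2
  proof -
    obtain a b where ab: "a \<in> w" "b \<in> w" "g1 = meet A x (i a)" "g2 = meet A x (i b)"
      using gg unfolding G_def by blast
    have abC: "a \<in> carrier A0" "b \<in> carrier A0" using ab wC by auto
    have m: "meet A0 a b \<in> w" using wD(5)[OF abC] ab by auto
    have e: "meet A x (i (meet A0 a b)) = meet A x (meet A (i a) (i b))" using iD(3)[OF abC] by simp
    have "ba_le A (meet A x (i (meet A0 a b))) g1" unfolding e ab(3)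
      by (rule le_meet_mono) (use x iD(1) abC in auto)
    moreover have "ba_le A (meet A x (i (meet A0 a b))) g2" unfolding e ab(4)
      by (rule le_meet_mono2) (use x iD(1) abC in auto)
    moreover have "meet A x (i (meet A0 a b)) \<in> G" unfolding G_def using m by auto
    ultimately show ?thesis by blast
  qed
  obtain u where u: "uf A u" "G \<subseteq> u" using uf_exists[OF GC ne z dir] by blast
  note uD = ufD[OF u(1)]
  have mem: "meet A x (i a) \<in> u" if "a \<in> w" for a using u(2) that unfolding G_def by auto
  have "x \<in> u" using mem[OF wD(3)] uD(5)[OF x iD(1)] wC wD(3) by auto
  moreover have "i a \<in> u \<longleftrightarrow> a \<in> w" if a: "a \<in> carrier A0" for a
  proof
    assume "a \<in> w" thus "i a \<in> u" using mem uD(5)[OF x iD(1)[OF a]] by auto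
  next
    assume ia: "i a \<in> u"
    show "a \<in> w"
    proof (rule ccontr)
      assume "a \<notin> w"
      hence "compl A0 a \<in> w" using wD(6)[OF a] by auto
      hence "i (compl A0 a) \<in> u" using mem wC uD(5)[OF x iD(1)] by blast
      hence "compl A (i a) \<in> u" using iD(4)[OF a] by simp
      thus False using uD(6)[OF iD(1)[OF a]] ia by auto
    qed
  qed
  ultimately show ?thesis using u(1) by blast
qed

lemma uf_principal: assumes "x \<in> carrier A" "x \<noteq> zero A" shows "\<exists>u. uf A u \<and> x \<in> u"
  using uf_exists[of "{x}"] assms le_refl[of x] by auto

lemma uf_separate: assumes x: "x \<in> carrier A" and y: "y \<in> carrier A" and ne: "x \<noteq> y"
  shows "\<exists>u. uf A u \<and> (x \<in> u \<longleftrightarrow> y \<notin> u)"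
proof (cases "meet A x (compl A y) = zero A")
  case True
  hence l1: "ba_le A x y" using meet0_le[OF x y] by auto
  show ?thesis
  proof (cases "meet A y (compl A x) = zero A")
    case True
    hence "ba_le A y x" using meet0_le[OF y x] by auto
    thus ?thesis using le_antisym[OF x y l1] ne by auto
  next
    case False
    then obtain u where u: "uf A u" "meet A y (compl A x) \<in> u" using uf_principal[of "meet A y (compl A x)"] x y by auto
    hence "y \<in> u" "compl A x \<in> u" using ufD(5)[OF u(1), of y "compl A x"] x y by auto
    hence "x \<notin> u" using ufD(6)[OF u(1) x] by auto
    thus ?thesis using u \<open>y \<in> u\<close> by auto
  qed
next
  case False
  then obtain u where u: "uf A u" "meet A x (compl A y) \<in> u" using uf_principal[of "meet A x (compl A y)"] x y by auto
  hence "x \<in> u" "compl A y \<in> u" using ufD(5)[OF u(1), of x "compl A y"] x y by auto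
  hence "y \<notin> u" using ufD(6)[OF u(1) y] by auto
  thus ?thesis using u \<open>x \<in> u\<close> by auto
qed

lemma uf_lift: assumes A0: "is_BA A0" and i: "bhom A0 A i" and inj: "inj_on i (carrier A0)"
  and w: "uf A0 w" shows "\<exists>u. uf A u \<and> (\<forall>a\<in>carrier A0. i a \<in> u \<longleftrightarrow> a \<in> w)"
proof -
  have "meet A (one A) (i a) \<noteq> zero A" if a: "a \<in> w" for a
  proof
    assume h: "meet A (one A) (i a) = zero A"
    have aC: "a \<in> carrier A0" using ufD(1)[OF w] a by auto
    have "i a = zero A" using h bhomD(1)[OF i aC] by simp
    hence "i a = i (zero A0)" using bhomD(5)[OF i] by simp
    hence "a = zero A0" using inj aC ba.zc[of A0] A0 unfolding ba_def inj_on_def by blast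
    thus False using ufD(2)[OF w] a by simp
  qed
  thus ?thesis using uf_extend[OF i w oc] by blast
qed

end

lemma interpolation:
  assumes B0: "is_BA A0" and B1: "is_BA A1" and B2: "is_BA A2" and i1: "bhom A0 A1 i1" and i2: "bhom A0 A2 i2"
    and x: "x \<in> carrier A1" and y: "y \<in> carrier A2"
    and H: "\<And>u v. uf A1 u \<Longrightarrow> uf A2 v \<Longrightarrow> (\<forall>a\<in>carrier A0. i1 a \<in> u \<longleftrightarrow> i2 a \<in> v) \<Longrightarrow> x \<in> u \<Longrightarrow> y \<in> v"
  shows "\<exists>z\<in>carrier A0. ba_le A1 x (i1 z) \<and> ba_le A2 (i2 z) y"
proof (rule ccontr)
  interpret a0: ba A0 using B0 by (simp add: ba_def)
  interpret a1: ba A1 using B1 by (simp add: ba_def)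
  interpret a2: ba A2 using B2 by (simp add: ba_def)
  note d1 = bhomD[OF i1] and d2 = bhomD[OF i2]
  assume nz: "\<not> ?thesis"
  define G where "G = {meet A2 (compl A2 y) (i2 a) | a. a \<in> carrier A0 \<and> ba_le A1 x (i1 a)}"
  have GC: "G \<subseteq> carrier A2" unfolding G_def using y d2(1) by auto
  have oneG: "meet A2 (compl A2 y) (i2 (one A0)) \<in> G"
    unfolding G_def using d1(6) a1.le_one[OF x] by auto
  hence ne: "G \<noteq> {}" by auto
  have z: "zero A2 \<notin> G"
  proof
    assume "zero A2 \<in> G"
    then obtain a where a: "a \<in> carrier A0" "ba_le A1 x (i1 a)" "zero A2 = meet A2 (compl A2 y) (i2 a)"
      unfolding G_def by auto
    hence "meet A2 (i2 a) (compl A2 y) = zero A2" using a2.mcomm[of "i2 a" "compl A2 y"] d2(1) y by auto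
    hence "ba_le A2 (i2 a) y" using a2.meet0_le[of "i2 a" y] d2(1)[OF a(1)] y by auto
    thus False using nz a by auto
  qed
  have dir: "\<exists>g\<in>G. ba_le A2 g g1 \<and> ba_le A2 g g2" if gg: "g1 \<in> G" "g2 \<in> G" for g1 g2
  proof -
    obtain a b where ab: "a \<in> carrier A0" "ba_le A1 x (i1 a)" "b \<in> carrier A0" "ba_le A1 x (i1 b)"
      "g1 = meet A2 (compl A2 y) (i2 a)" "g2 = meet A2 (compl A2 y) (i2 b)"
      using gg unfolding G_def by blast
    have le: "ba_le A1 x (i1 (meet A0 a b))" unfolding d1(3)[OF ab(1,3)]
      by (rule a1.le_meetI) (use x d1(1) ab in auto)
    have e: "meet A2 (compl A2 y) (i2 (meet A0 a b)) = meet A2 (compl A2 y) (meet A2 (i2 a) (i2 b))"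
      using d2(3)[OF ab(1,3)] by simp
    have "ba_le A2 (meet A2 (compl A2 y) (i2 (meet A0 a b))) g1" unfolding e ab(5)
      by (rule a2.le_meet_mono) (use y d2(1) ab in auto)
    moreover have "ba_le A2 (meet A2 (compl A2 y) (i2 (meet A0 a b))) g2" unfolding e ab(6)
      by (rule a2.le_meet_mono2) (use y d2(1) ab in auto)
    moreover have "meet A2 (compl A2 y) (i2 (meet A0 a b)) \<in> G" unfolding G_def using le ab by auto
    ultimately show ?thesis by blast
  qed
  obtain v where v: "uf A2 v" "G \<subseteq> v" using a2.uf_exists[OF GC ne z dir] by blast
  note vD = ufD[OF v(1)]
  define w where "w = {a \<in> carrier A0. i2 a \<in> v}"
  have w: "uf A0 w" unfolding w_def by (rule uf_preimage[OF B0 i2 v(1)])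
  have "compl A2 y \<in> v" using v(2) oneG vD(5)[of "compl A2 y" "i2 (one A0)"] y d2(1) a0.oc by auto
  hence yv: "y \<notin> v" using vD(6)[OF y] by auto
  have nzw: "meet A1 x (i1 a) \<noteq> zero A1" if a: "a \<in> w" for a
  proof
    assume h: "meet A1 x (i1 a) = zero A1"
    have aC: "a \<in> carrier A0" using a unfolding w_def by auto
    have "ba_le A1 x (compl A1 (i1 a))" using a1.meet0_lec[OF x d1(1)[OF aC] h] .
    hence "ba_le A1 x (i1 (compl A0 a))" using d1(4)[OF aC] by simp
    hence "meet A2 (compl A2 y) (i2 (compl A0 a)) \<in> G" unfolding G_def using aC by auto
    hence "meet A2 (compl A2 y) (i2 (compl A0 a)) \<in> v" using v(2) by auto
    hence "i2 (compl A0 a) \<in> v" using vD(5)[of "compl A2 y" "i2 (compl A0 a)"] y d2(1) aC by auto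
    hence "compl A2 (i2 a) \<in> v" using d2(4)[OF aC] by simp
    hence "i2 a \<notin> v" using vD(6)[OF d2(1)[OF aC]] by auto
    thus False using a unfolding w_def by auto
  qed
  obtain u where u: "uf A1 u" "x \<in> u" "\<forall>a\<in>carrier A0. i1 a \<in> u \<longleftrightarrow> a \<in> w"
    using a1.uf_extend[OF i1 w x nzw] by blast
  have "\<forall>a\<in>carrier A0. i1 a \<in> u \<longleftrightarrow> i2 a \<in> v" using u(3) unfolding w_def by auto
  hence "y \<in> v" using H[OF u(1) v(1)] u(2) by auto
  thus False using yv by auto
qed




lemma hom_bhom: "is_hom Ops A B h \<Longrightarrow> bhom A B h"
  unfolding is_hom_def bhom_def by blast
lemma endo_bhom: "is_BA_endo A f \<Longrightarrow> bhom A A f"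
  unfolding is_BA_endo_def bhom_def by blast
lemma var_BA: "in_variety \<alpha> Ops A \<Longrightarrow> is_BA A"
  unfolding in_variety_def by blast
lemma var_endo: "in_variety \<alpha> Ops A \<Longrightarrow> p \<in> Ops \<Longrightarrow> is_BA_endo A (ops A p)"
  unfolding in_variety_def by blast
lemma var_eq: "in_variety \<alpha> Ops A \<Longrightarrow> set t1 \<subseteq> Ops \<Longrightarrow> set t2 \<subseteq> Ops \<Longrightarrow>
   (\<And>k. k < \<alpha> \<Longrightarrow> word_map t1 k = word_map t2 k) \<Longrightarrow> x \<in> carrier A \<Longrightarrow> eval_word A t1 x = eval_word A t2 x"
  unfolding in_variety_def by blast
lemma endo_closed: "is_BA_endo A f \<Longrightarrow> x \<in> carrier A \<Longrightarrow> f x \<in> carrier A"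
  unfolding is_BA_endo_def by blast
lemma eval_closed: "in_variety \<alpha> Ops A \<Longrightarrow> set t \<subseteq> Ops \<Longrightarrow> x \<in> carrier A \<Longrightarrow> eval_word A t x \<in> carrier A"
  by (induction t) (auto intro: endo_closed[OF var_endo])

definition pre :: "('a,'i,'x) sba_scheme \<Rightarrow> 'i opl \<Rightarrow> 'a set \<Rightarrow> 'a set" where
  "pre A p u = {x \<in> carrier A. ops A p x \<in> u}"

definition preW :: "('a,'i,'x) sba_scheme \<Rightarrow> 'i opl list \<Rightarrow> 'a set \<Rightarrow> 'a set" where
  "preW A t u = {x \<in> carrier A. eval_word A t x \<in> u}"

lemma pre_uf: "in_variety \<alpha> Ops A \<Longrightarrow> p \<in> Ops \<Longrightarrow> uf A u \<Longrightarrow> uf A (pre A p u)"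
  unfolding pre_def by (rule uf_preimage[OF var_BA endo_bhom[OF var_endo]])

locale amalg =
  fixes \<alpha> :: "'i::wellorder" and Ops :: "'i opl set"
    and A0 :: "('a,'i) sba" and A1 :: "('b,'i) sba" and A2 :: "('c,'i) sba"
    and i1 :: "'a \<Rightarrow> 'b" and i2 :: "'a \<Rightarrow> 'c"
  assumes V0: "in_variety \<alpha> Ops A0" and V1: "in_variety \<alpha> Ops A1" and V2: "in_variety \<alpha> Ops A2"
    and M1: "is_mono Ops A0 A1 i1" and M2: "is_mono Ops A0 A2 i2"
begin

definition P :: "('b set \<times> 'c set) set" where
  "P = {(u,v). uf A1 u \<and> uf A2 v \<and> (\<forall>a\<in>carrier A0. i1 a \<in> u \<longleftrightarrow> i2 a \<in> v)}"

definition sem :: "('b \<times> 'c) list \<Rightarrow> ('b set \<times> 'c set) set" where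
  "sem l = {(u,v) \<in> P. \<exists>(x,y)\<in>set l. x \<in> u \<and> y \<in> v}"

definition Dsets :: "('b set \<times> 'c set) set set" where
  "Dsets = {sem l | l. set l \<subseteq> carrier A1 \<times> carrier A2}"

definition opD :: "'i opl \<Rightarrow> ('b set \<times> 'c set) set \<Rightarrow> ('b set \<times> 'c set) set" where
  "opD p S = {(u,v) \<in> P. (pre A1 p u, pre A2 p v) \<in> S}"

definition E :: "(('b set \<times> 'c set) set, 'i) sba" where
  "E = \<lparr>carrier = Dsets, join = (\<union>), meet = (\<inter>), compl = (\<lambda>S. P - S), zero = {}, one = P, ops = opD\<rparr>"

definition R1 :: "'b \<Rightarrow> ('b set \<times> 'c set) set" where "R1 x = {(u,v) \<in> P. x \<in> u}"
definition R2 :: "'c \<Rightarrow> ('b set \<times> 'c set) set" where "R2 y = {(u,v) \<in> P. y \<in> v}"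

lemma B0: "is_BA A0" and B1: "is_BA A1" and B2: "is_BA A2"
  using V0 V1 V2 by (auto intro: var_BA)

lemma h1: "bhom A0 A1 i1" and h2: "bhom A0 A2 i2"
  using M1 M2 unfolding is_mono_def by (auto intro: hom_bhom)

lemma Pmem: "(u,v) \<in> P \<longleftrightarrow> uf A1 u \<and> uf A2 v \<and> (\<forall>a\<in>carrier A0. i1 a \<in> u \<longleftrightarrow> i2 a \<in> v)"
  unfolding P_def by auto

lemma pre_P: assumes p: "p \<in> Ops" and uv: "(u,v) \<in> P" shows "(pre A1 p u, pre A2 p v) \<in> P"
proof -
  have u: "uf A1 u" and v: "uf A2 v" and c: "\<And>a. a\<in>carrier A0 \<Longrightarrow> i1 a \<in> u \<longleftrightarrow> i2 a \<in> v"
    using uv unfolding P_def by auto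
  have "i1 a \<in> pre A1 p u \<longleftrightarrow> i2 a \<in> pre A2 p v" if a: "a \<in> carrier A0" for a
  proof -
    have oa: "ops A0 p a \<in> carrier A0" using endo_closed[OF var_endo[OF V0 p] a] .
    have e1: "ops A1 p (i1 a) = i1 (ops A0 p a)" using M1 p a unfolding is_mono_def is_hom_def by auto
    have e2: "ops A2 p (i2 a) = i2 (ops A0 p a)" using M2 p a unfolding is_mono_def is_hom_def by auto
    show ?thesis unfolding pre_def using e1 e2 c[OF oa] bhomD(1)[OF h1 a] bhomD(1)[OF h2 a] by auto
  qed
  thus ?thesis unfolding P_def using pre_uf[OF V1 p u] pre_uf[OF V2 p v] by auto
qed

lemma sem_sub: "sem l \<subseteq> P" unfolding sem_def by auto
lemma D_sub: "S \<in> Dsets \<Longrightarrow> S \<subseteq> P" unfolding Dsets_def using sem_sub by auto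

lemma D_zero: "{} \<in> Dsets"
proof -
  have "sem [] = {}" unfolding sem_def by auto
  thus ?thesis unfolding Dsets_def by force
qed

lemma D_one: "P \<in> Dsets"
proof -
  have "sem [(one A1, one A2)] = P" unfolding sem_def P_def using ufD(3)[of A1] ufD(3)[of A2] by auto
  moreover have "set [(one A1, one A2)] \<subseteq> carrier A1 \<times> carrier A2"
    using ba.oc[of A1] ba.oc[of A2] B1 B2 unfolding ba_def by auto
  ultimately show ?thesis unfolding Dsets_def by blast
qed

lemma D_union: "S \<in> Dsets \<Longrightarrow> T \<in> Dsets \<Longrightarrow> S \<union> T \<in> Dsets"
proof -
  assume "S \<in> Dsets" "T \<in> Dsets"
  then obtain l l' where "S = sem l" "T = sem l'" "set l \<subseteq> carrier A1 \<times> carrier A2" "set l' \<subseteq> carrier A1 \<times> carrier A2"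
    unfolding Dsets_def by auto
  moreover have "sem l \<union> sem l' = sem (l @ l')" unfolding sem_def by auto
  moreover have "set (l @ l') \<subseteq> carrier A1 \<times> carrier A2" using calculation by auto
  ultimately show ?thesis unfolding Dsets_def by blast
qed


definition lc :: "('b \<times> 'c) list \<Rightarrow> ('b \<times> 'c) list \<Rightarrow> ('b \<times> 'c) list" where
  "lc l l' = concat (map (\<lambda>(x,y). map (\<lambda>(x',y'). (meet A1 x x', meet A2 y y')) l') l)"

lemma set_lc: "set (lc l l') = {(meet A1 x x', meet A2 y y') | x y x' y'. (x,y) \<in> set l \<and> (x',y') \<in> set l'}"
  unfolding lc_def by force

lemma lc_carrier: assumes "set l \<subseteq> carrier A1 \<times> carrier A2" "set l' \<subseteq> carrier A1 \<times> carrier A2"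
  shows "set (lc l l') \<subseteq> carrier A1 \<times> carrier A2"
proof -
  interpret a1: ba A1 using B1 by (simp add: ba_def)
  interpret a2: ba A2 using B2 by (simp add: ba_def)
  show ?thesis
  proof
    fix q assume "q \<in> set (lc l l')"
    then obtain x y x' y' where "q = (meet A1 x x', meet A2 y y')" "(x,y) \<in> set l" "(x',y') \<in> set l'"
      unfolding set_lc by blast
    moreover hence "x \<in> carrier A1" "y \<in> carrier A2" "x' \<in> carrier A1" "y' \<in> carrier A2" using assms by auto
    ultimately show "q \<in> carrier A1 \<times> carrier A2" by simp
  qed
qed

lemma sem_inter: assumes l: "set l \<subseteq> carrier A1 \<times> carrier A2" and l': "set l' \<subseteq> carrier A1 \<times> carrier A2"
  shows "sem l \<inter> sem l' = sem (lc l l')"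
proof (intro set_eqI iffI)
  fix q assume q: "q \<in> sem l \<inter> sem l'"
  obtain u v where q': "q = (u,v)" by force
  from q obtain x y x' y' where "(u,v) \<in> P" "(x,y) \<in> set l" "x \<in> u" "y \<in> v" "(x',y') \<in> set l'" "x' \<in> u" "y' \<in> v"
    unfolding q' sem_def by auto
  moreover hence "meet A1 x x' \<in> u" "meet A2 y y' \<in> v"
    using ufD(5)[of A1 u x x'] ufD(5)[of A2 v y y'] l l' unfolding Pmem by auto
  ultimately show "q \<in> sem (lc l l')" unfolding q' sem_def set_lc by blast
next
  fix q assume q: "q \<in> sem (lc l l')"
  obtain u v where q': "q = (u,v)" by force
  from q obtain x y x' y' where "(u,v) \<in> P" "(x,y) \<in> set l" "(x',y') \<in> set l'" "meet A1 x x' \<in> u" "meet A2 y y' \<in> v"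
    unfolding q' sem_def set_lc by blast
  moreover hence "x \<in> u" "x' \<in> u" "y \<in> v" "y' \<in> v"
    using ufD(5)[of A1 u x x'] ufD(5)[of A2 v y y'] l l' unfolding Pmem by auto
  ultimately show "q \<in> sem l \<inter> sem l'" unfolding q' sem_def by blast
qed

lemma D_inter: "S \<in> Dsets \<Longrightarrow> T \<in> Dsets \<Longrightarrow> S \<inter> T \<in> Dsets"
proof -
  assume "S \<in> Dsets" "T \<in> Dsets"
  then obtain l l' where ll: "S = sem l" "T = sem l'" "set l \<subseteq> carrier A1 \<times> carrier A2" "set l' \<subseteq> carrier A1 \<times> carrier A2"
    unfolding Dsets_def by auto
  have "S \<inter> T = sem (lc l l')" using sem_inter[OF ll(3,4)] ll by simp
  moreover have "set (lc l l') \<subseteq> carrier A1 \<times> carrier A2" using lc_carrier[OF ll(3,4)] .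
  ultimately show ?thesis unfolding Dsets_def by blast
qed

lemma D_compl_sem: "set l \<subseteq> carrier A1 \<times> carrier A2 \<Longrightarrow> P - sem l \<in> Dsets"
proof (induction l)
  case Nil
  have "P - sem [] = P" unfolding sem_def by auto
  thus ?case using D_one by simp
next
  case (Cons a l)
  obtain x y where a: "a = (x,y)" by force
  have xy: "x \<in> carrier A1" "y \<in> carrier A2" using Cons.prems a by auto
  interpret a1: ba A1 using B1 by (simp add: ba_def)
  interpret a2: ba A2 using B2 by (simp add: ba_def)
  have e: "P - sem (a # l) = (P - sem [(x,y)]) \<inter> (P - sem l)" unfolding a sem_def by auto
  have "P - sem [(x,y)] = sem [(compl A1 x, one A2), (one A1, compl A2 y)]"
  proof (intro set_eqI)
    fix q :: "'b set \<times> 'c set"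
    obtain u v where q: "q = (u,v)" by force
    show "q \<in> P - sem [(x,y)] \<longleftrightarrow> q \<in> sem [(compl A1 x, one A2), (one A1, compl A2 y)]"
    proof (cases "(u,v) \<in> P")
      case True
      hence uv: "uf A1 u" "uf A2 v" unfolding Pmem by auto
      show ?thesis unfolding q sem_def using True ufD(3,6)[OF uv(1)] ufD(3,6)[OF uv(2)] xy by auto
    next
      case False thus ?thesis unfolding q sem_def by auto
    qed
  qed
  moreover have "set [(compl A1 x, one A2), (one A1, compl A2 y)] \<subseteq> carrier A1 \<times> carrier A2" using xy by auto
  ultimately have "P - sem [(x,y)] \<in> Dsets" unfolding Dsets_def by blast
  moreover have "P - sem l \<in> Dsets" using Cons by auto
  ultimately show ?case unfolding e by (rule D_inter)
qed

lemma D_compl: "S \<in> Dsets \<Longrightarrow> P - S \<in> Dsets"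
  unfolding Dsets_def using D_compl_sem unfolding Dsets_def by blast

lemma opD_sem: assumes p: "p \<in> Ops" and l: "set l \<subseteq> carrier A1 \<times> carrier A2"
  shows "opD p (sem l) = sem (map (\<lambda>(x,y). (ops A1 p x, ops A2 p y)) l)"
proof (intro set_eqI)
  fix q :: "'b set \<times> 'c set"
  obtain u v where q: "q = (u,v)" by force
  show "q \<in> opD p (sem l) \<longleftrightarrow> q \<in> sem (map (\<lambda>(x,y). (ops A1 p x, ops A2 p y)) l)"
    unfolding q opD_def sem_def using pre_P[OF p, of u v] l by (auto simp: pre_def) force+
qed

lemma D_ops: assumes p: "p \<in> Ops" and S: "S \<in> Dsets" shows "opD p S \<in> Dsets"
proof -
  obtain l where l: "S = sem l" "set l \<subseteq> carrier A1 \<times> carrier A2" using S unfolding Dsets_def by auto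
  have "set (map (\<lambda>(x,y). (ops A1 p x, ops A2 p y)) l) \<subseteq> carrier A1 \<times> carrier A2"
    using l(2) endo_closed[OF var_endo[OF V1 p]] endo_closed[OF var_endo[OF V2 p]] by auto
  thus ?thesis unfolding l(1) opD_sem[OF p l(2)] Dsets_def by blast
qed

end



lemma preW_Nil: "uf A u \<Longrightarrow> preW A [] u = u"
  unfolding preW_def using ufD(1) by fastforce

lemma preW_Cons: "in_variety \<alpha> Ops A \<Longrightarrow> set (p # t) \<subseteq> Ops \<Longrightarrow> preW A (p # t) u = preW A t (pre A p u)"
  unfolding preW_def pre_def using eval_closed[of \<alpha> Ops A t] by auto

context amalg begin

lemma E_simps[simp]: "carrier E = Dsets" "join E = (\<union>)" "meet E = (\<inter>)" "compl E = (\<lambda>S. P - S)"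
  "zero E = {}" "one E = P" "ops E = opD"
  unfolding E_def by simp_all

lemma PD: "(u,v) \<in> P \<Longrightarrow> uf A1 u" "(u,v) \<in> P \<Longrightarrow> uf A2 v"
  "(u,v) \<in> P \<Longrightarrow> a \<in> carrier A0 \<Longrightarrow> i1 a \<in> u \<longleftrightarrow> i2 a \<in> v"
  unfolding P_def by auto

lemma E_BA: "is_BA E"
  unfolding is_BA_def E_simps
  apply (intro conjI ballI)
  apply (simp_all add: D_zero D_one D_union D_inter D_compl)
  apply (auto dest: D_sub)
  done

lemma E_endo: assumes p: "p \<in> Ops" shows "is_BA_endo E (opD p)"
  unfolding is_BA_endo_def E_simps
proof (intro conjI ballI)
  show "\<And>x. x \<in> Dsets \<Longrightarrow> opD p x \<in> Dsets" using D_ops[OF p] .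
  show "\<And>x y. opD p (x \<union> y) = opD p x \<union> opD p y" unfolding opD_def by auto
  show "\<And>x y. opD p (x \<inter> y) = opD p x \<inter> opD p y" unfolding opD_def by auto
  show "\<And>x. opD p (P - x) = P - opD p x" unfolding opD_def using pre_P[OF p] by auto
  show "opD p {} = {}" unfolding opD_def by auto
  show "opD p P = P" unfolding opD_def using pre_P[OF p] by auto
qed

lemma eval_E: assumes t: "set t \<subseteq> Ops" and S: "S \<subseteq> P"
  shows "eval_word E t S = {(u,v) \<in> P. (preW A1 t u, preW A2 t v) \<in> S}"
  using t
proof (induction t)
  case Nil
  show ?case
  proof (intro set_eqI)
    fix q :: "'b set \<times> 'c set"
    obtain u v where q: "q = (u,v)" by force
    show "q \<in> eval_word E [] S \<longleftrightarrow> q \<in> {(u,v) \<in> P. (preW A1 [] u, preW A2 [] v) \<in> S}"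
    proof (cases "(u,v) \<in> P")
      case True thus ?thesis unfolding q using preW_Nil[OF PD(1)[OF True]] preW_Nil[OF PD(2)[OF True]] by simp
    next
      case False thus ?thesis unfolding q using S by auto
    qed
  qed
next
  case (Cons p t)
  have p: "p \<in> Ops" and t: "set t \<subseteq> Ops" using Cons.prems by auto
  have "eval_word E (p # t) S = opD p {(u,v) \<in> P. (preW A1 t u, preW A2 t v) \<in> S}"
    using Cons.IH[OF t] by simp
  also have "\<dots> = {(u,v) \<in> P. (preW A1 t (pre A1 p u), preW A2 t (pre A2 p v)) \<in> S}"
    unfolding opD_def using pre_P[OF p] by auto
  also have "\<dots> = {(u,v) \<in> P. (preW A1 (p # t) u, preW A2 (p # t) v) \<in> S}"
    using preW_Cons[OF V1 Cons.prems] preW_Cons[OF V2 Cons.prems] by simp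
  finally show ?case .
qed

lemma E_var: "in_variety \<alpha> Ops E"
  unfolding in_variety_def
proof (intro conjI ballI allI impI)
  show "is_BA E" by (rule E_BA)
  show "\<And>p. p \<in> Ops \<Longrightarrow> is_BA_endo E (ops E p)" using E_endo by simp
  fix t1 t2 :: "'i opl list" and S
  assume t1: "set t1 \<subseteq> Ops" and t2: "set t2 \<subseteq> Ops" and w: "\<forall>k<\<alpha>. word_map t1 k = word_map t2 k"
    and S: "S \<in> carrier E"
  have SP: "S \<subseteq> P" using S D_sub by simp
  have e1: "preW A1 t1 u = preW A1 t2 u" for u
    unfolding preW_def using var_eq[OF V1 t1 t2] w by auto
  have e2: "preW A2 t1 v = preW A2 t2 v" for v
    unfolding preW_def using var_eq[OF V2 t1 t2] w by auto
  show "eval_word E t1 S = eval_word E t2 S"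
    unfolding eval_E[OF t1 SP] eval_E[OF t2 SP] e1 e2 ..
qed

end



context amalg begin

lemma R1_sem: "x \<in> carrier A1 \<Longrightarrow> R1 x = sem [(x, one A2)]"
  unfolding R1_def sem_def using PD(2) ufD(3)[of A2] by auto
lemma R2_sem: "y \<in> carrier A2 \<Longrightarrow> R2 y = sem [(one A1, y)]"
  unfolding R2_def sem_def using PD(1) ufD(3)[of A1] by auto

lemma R1_D: "x \<in> carrier A1 \<Longrightarrow> R1 x \<in> Dsets"
  unfolding R1_sem Dsets_def using ba.oc[of A2] B2 unfolding ba_def by auto
lemma R2_D: "y \<in> carrier A2 \<Longrightarrow> R2 y \<in> Dsets"
  unfolding R2_sem Dsets_def using ba.oc[of A1] B1 unfolding ba_def by auto

lemma R1_hom: "is_hom Ops A1 E R1"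
  unfolding is_hom_def E_simps
proof (intro conjI ballI)
  interpret a1: ba A1 using B1 by (simp add: ba_def)
  show "\<And>x. x \<in> carrier A1 \<Longrightarrow> R1 x \<in> Dsets" by (rule R1_D)
  show "R1 (join A1 x y) = R1 x \<union> R1 y" if "x \<in> carrier A1" "y \<in> carrier A1" for x y
    unfolding R1_def using ufD(4)[OF PD(1), OF _ that] by auto
  show "R1 (meet A1 x y) = R1 x \<inter> R1 y" if "x \<in> carrier A1" "y \<in> carrier A1" for x y
    unfolding R1_def using ufD(5)[OF PD(1), OF _ that] by auto
  show "R1 (compl A1 x) = P - R1 x" if "x \<in> carrier A1" for x
    unfolding R1_def using ufD(6)[OF PD(1), OF _ that] by auto
  show "R1 (zero A1) = {}" unfolding R1_def using ufD(2)[OF PD(1)] by auto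
  show "R1 (one A1) = P" unfolding R1_def using ufD(3)[OF PD(1)] by auto
  show "R1 (ops A1 p x) = opD p (R1 x)" if "p \<in> Ops" "x \<in> carrier A1" for p x
    unfolding R1_def opD_def using pre_P[OF that(1)] that(2) by (auto simp: pre_def)
qed

lemma R2_hom: "is_hom Ops A2 E R2"
  unfolding is_hom_def E_simps
proof (intro conjI ballI)
  interpret a2: ba A2 using B2 by (simp add: ba_def)
  show "\<And>x. x \<in> carrier A2 \<Longrightarrow> R2 x \<in> Dsets" by (rule R2_D)
  show "R2 (join A2 x y) = R2 x \<union> R2 y" if "x \<in> carrier A2" "y \<in> carrier A2" for x y
    unfolding R2_def using ufD(4)[OF PD(2), OF _ that] by auto
  show "R2 (meet A2 x y) = R2 x \<inter> R2 y" if "x \<in> carrier A2" "y \<in> carrier A2" for x y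
    unfolding R2_def using ufD(5)[OF PD(2), OF _ that] by auto
  show "R2 (compl A2 x) = P - R2 x" if "x \<in> carrier A2" for x
    unfolding R2_def using ufD(6)[OF PD(2), OF _ that] by auto
  show "R2 (zero A2) = {}" unfolding R2_def using ufD(2)[OF PD(2)] by auto
  show "R2 (one A2) = P" unfolding R2_def using ufD(3)[OF PD(2)] by auto
  show "R2 (ops A2 p x) = opD p (R2 x)" if "p \<in> Ops" "x \<in> carrier A2" for p x
    unfolding R2_def opD_def using pre_P[OF that(1)] that(2) by (auto simp: pre_def)
qed

lemma inj1: "inj_on i1 (carrier A0)" and inj2: "inj_on i2 (carrier A0)"
  using M1 M2 unfolding is_mono_def by auto

lemma R1_inj: "inj_on R1 (carrier A1)"
proof (rule inj_onI, rule ccontr)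
  interpret a1: ba A1 using B1 by (simp add: ba_def)
  interpret a2: ba A2 using B2 by (simp add: ba_def)
  fix x x' assume x: "x \<in> carrier A1" and x': "x' \<in> carrier A1" and e: "R1 x = R1 x'" and ne: "x \<noteq> x'"
  obtain u where u: "uf A1 u" "x \<in> u \<longleftrightarrow> x' \<notin> u" using a1.uf_separate[OF x x' ne] by blast
  have w: "uf A0 {a \<in> carrier A0. i1 a \<in> u}" by (rule uf_preimage[OF B0 h1 u(1)])
  obtain v where v: "uf A2 v" "\<forall>a\<in>carrier A0. i2 a \<in> v \<longleftrightarrow> a \<in> {a \<in> carrier A0. i1 a \<in> u}"
    using a2.uf_lift[OF B0 h2 inj2 w] by blast
  have "(u,v) \<in> P" unfolding P_def using u v by auto
  thus False using e u(2) unfolding R1_def by blast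
qed

lemma R2_inj: "inj_on R2 (carrier A2)"
proof (rule inj_onI, rule ccontr)
  interpret a1: ba A1 using B1 by (simp add: ba_def)
  interpret a2: ba A2 using B2 by (simp add: ba_def)
  fix x x' assume x: "x \<in> carrier A2" and x': "x' \<in> carrier A2" and e: "R2 x = R2 x'" and ne: "x \<noteq> x'"
  obtain v where v: "uf A2 v" "x \<in> v \<longleftrightarrow> x' \<notin> v" using a2.uf_separate[OF x x' ne] by blast
  have w: "uf A0 {a \<in> carrier A0. i2 a \<in> v}" by (rule uf_preimage[OF B0 h2 v(1)])
  obtain u where u: "uf A1 u" "\<forall>a\<in>carrier A0. i1 a \<in> u \<longleftrightarrow> a \<in> {a \<in> carrier A0. i2 a \<in> v}"
    using a1.uf_lift[OF B0 h1 inj1 w] by blast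
  have "(u,v) \<in> P" unfolding P_def using u v by auto
  thus False using e v(2) unfolding R2_def by blast
qed

lemma commute: "a \<in> carrier A0 \<Longrightarrow> R1 (i1 a) = R2 (i2 a)"
  unfolding R1_def R2_def P_def by auto

lemma super1: assumes x: "x \<in> carrier A1" and y: "y \<in> carrier A2" and le: "ba_le E (R1 x) (R2 y)"
  shows "\<exists>z\<in>carrier A0. ba_le A1 x (i1 z) \<and> ba_le A2 (i2 z) y"
proof (rule interpolation[OF B0 B1 B2 h1 h2 x y])
  fix u v assume "uf A1 u" "uf A2 v" "\<forall>a\<in>carrier A0. i1 a \<in> u \<longleftrightarrow> i2 a \<in> v" "x \<in> u"
  hence "(u,v) \<in> R1 x" unfolding R1_def P_def by auto
  thus "y \<in> v" using le unfolding ba_le_def R2_def by auto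
qed

lemma super2: assumes x: "x \<in> carrier A2" and y: "y \<in> carrier A1" and le: "ba_le E (R2 x) (R1 y)"
  shows "\<exists>z\<in>carrier A0. ba_le A2 x (i2 z) \<and> ba_le A1 (i1 z) y"
proof (rule interpolation[OF B0 B2 B1 h2 h1 x y])
  fix v u assume "uf A2 v" "uf A1 u" "\<forall>a\<in>carrier A0. i2 a \<in> v \<longleftrightarrow> i1 a \<in> u" "x \<in> v"
  hence "(u,v) \<in> R2 x" unfolding R2_def P_def by auto
  thus "y \<in> u" using le unfolding ba_le_def R1_def by auto
qed

end



definition transport :: "('e,'i) sba \<Rightarrow> ('e \<Rightarrow> 'd) \<Rightarrow> ('d,'i) sba" where
  "transport E f = (let g = inv_into (carrier E) f in
     \<lparr>carrier = f ` carrier E, join = (\<lambda>a b. f (join E (g a) (g b))),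
      meet = (\<lambda>a b. f (meet E (g a) (g b))), compl = (\<lambda>a. f (compl E (g a))),
      zero = f (zero E), one = f (one E), ops = (\<lambda>p a. f (ops E p (g a)))\<rparr>)"

lemma ball_img: "(\<forall>x\<in>f ` A. P x) \<longleftrightarrow> (\<forall>x\<in>A. P (f x))" by auto

context
  fixes E :: "('e,'i::wellorder) sba" and f :: "'e \<Rightarrow> 'd"
  assumes inj: "inj_on f (carrier E)"
begin

lemma T_simps:
  "carrier (transport E f) = f ` carrier E"
  "zero (transport E f) = f (zero E)" "one (transport E f) = f (one E)"
  "x \<in> carrier E \<Longrightarrow> y \<in> carrier E \<Longrightarrow> join (transport E f) (f x) (f y) = f (join E x y)"
  "x \<in> carrier E \<Longrightarrow> y \<in> carrier E \<Longrightarrow> meet (transport E f) (f x) (f y) = f (meet E x y)"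
  "x \<in> carrier E \<Longrightarrow> compl (transport E f) (f x) = f (compl E x)"
  "x \<in> carrier E \<Longrightarrow> ops (transport E f) p (f x) = f (ops E p x)"
  unfolding transport_def Let_def using inv_into_f_f[OF inj] by simp_all

lemma T_BA: assumes "is_BA E" shows "is_BA (transport E f)"
proof -
  interpret ba E using assms by (simp add: ba_def)
  have jmd: "\<And>x y z. x \<in> carrier E \<Longrightarrow> y \<in> carrier E \<Longrightarrow> z \<in> carrier E \<Longrightarrow>
     join E x (meet E y z) = meet E (join E x y) (join E x z)" using BA' by blast
  show ?thesis
    unfolding is_BA_def T_simps(1) ball_img
    by (intro conjI ballI; (simp add: T_simps)?; (rule arg_cong[where f=f])?; (simp add: abs1 abs2)?;
        (rule jcomm mcomm jassoc massoc mjd jmd; simp)?)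
qed

lemma T_le: assumes B: "is_BA E" and xy: "x \<in> carrier E" "y \<in> carrier E"
  shows "ba_le (transport E f) (f x) (f y) \<longleftrightarrow> ba_le E x y"
proof -
  interpret ba E using B by (simp add: ba_def)
  have "f (meet E x y) = f x \<longleftrightarrow> meet E x y = x"
    using inj_onD[OF inj, of "meet E x y" x] xy by auto
  thus ?thesis unfolding ba_le_def T_simps(5)[OF xy] .
qed

lemma T_endo: assumes B: "is_BA E" and e: "is_BA_endo E (ops E p)"
  shows "is_BA_endo (transport E f) (ops (transport E f) p)"
proof -
  interpret ba E using B by (simp add: ba_def)
  have cl: "\<And>x. x \<in> carrier E \<Longrightarrow> ops E p x \<in> carrier E" using e unfolding is_BA_endo_def by blast
  have ej: "\<And>x y. x \<in> carrier E \<Longrightarrow> y \<in> carrier E \<Longrightarrow> ops E p (join E x y) = join E (ops E p x) (ops E p y)"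
    and em: "\<And>x y. x \<in> carrier E \<Longrightarrow> y \<in> carrier E \<Longrightarrow> ops E p (meet E x y) = meet E (ops E p x) (ops E p y)"
    and ec: "\<And>x. x \<in> carrier E \<Longrightarrow> ops E p (compl E x) = compl E (ops E p x)"
    and ez: "ops E p (zero E) = zero E" and eo: "ops E p (one E) = one E"
    using e unfolding is_BA_endo_def by blast+
  show ?thesis unfolding is_BA_endo_def T_simps(1) ball_img
    by (simp add: T_simps cl ej em ec ez eo)
qed

lemma T_eval: assumes V: "in_variety \<alpha> Ops E" and t: "set t \<subseteq> Ops" and x: "x \<in> carrier E"
  shows "eval_word (transport E f) t (f x) = f (eval_word E t x)"
  using t
proof (induction t)
  case Nil show ?case by simp
next
  case (Cons p t)
  hence "set t \<subseteq> Ops" by auto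
  thus ?case using Cons eval_closed[OF V _ x] T_simps(7) by simp
qed

lemma T_var: assumes V: "in_variety \<alpha> Ops E" shows "in_variety \<alpha> Ops (transport E f)"
  unfolding in_variety_def
proof (intro conjI ballI allI impI)
  show "is_BA (transport E f)" using T_BA[OF var_BA[OF V]] .
  show "\<And>p. p \<in> Ops \<Longrightarrow> is_BA_endo (transport E f) (ops (transport E f) p)"
    using T_endo[OF var_BA[OF V] var_endo[OF V]] .
  fix t1 t2 :: "'i opl list" and x
  assume t1: "set t1 \<subseteq> Ops" and t2: "set t2 \<subseteq> Ops" and w: "\<forall>k<\<alpha>. word_map t1 k = word_map t2 k"
    and x: "x \<in> carrier (transport E f)"
  then obtain y where y: "y \<in> carrier E" "x = f y" unfolding T_simps by auto
  show "eval_word (transport E f) t1 x = eval_word (transport E f) t2 x"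
    unfolding y(2) T_eval[OF V t1 y(1)] T_eval[OF V t2 y(1)] using var_eq[OF V t1 t2 _ y(1)] w by simp
qed

lemma T_mono: "is_mono Ops E (transport E f) f"
  unfolding is_mono_def is_hom_def T_simps(1) using inj by (auto simp: T_simps)

end

lemma mono_comp: assumes "is_mono Ops A B h" "is_mono Ops B C k" shows "is_mono Ops A C (k \<circ> h)"
proof -
  have h: "is_hom Ops A B h" "inj_on h (carrier A)" and k: "is_hom Ops B C k" "inj_on k (carrier B)"
    using assms unfolding is_mono_def by auto
  have hc: "\<And>x. x \<in> carrier A \<Longrightarrow> h x \<in> carrier B" using h(1) unfolding is_hom_def by blast
  have "inj_on (k \<circ> h) (carrier A)" using h(2) k(2) hc by (auto intro: comp_inj_on simp: inj_on_def)
  moreover have "is_hom Ops A C (k \<circ> h)" using h(1) k(1) hc unfolding is_hom_def by auto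
  ultimately show ?thesis unfolding is_mono_def by auto
qed

fun decode :: "('b + 'c + 'i) list \<Rightarrow> ('b \<times> 'c) list" where
  "decode (Inl x # Inr (Inl y) # r) = (x, y) # decode r"
| "decode _ = []"

definition code :: "('b \<times> 'c) list \<Rightarrow> ('b + 'c + 'i) list" where
  "code l = concat (map (\<lambda>(x,y). [Inl x, Inr (Inl y)]) l)"

lemma decode_code: "decode (code l) = l"
  unfolding code_def by (induction l) auto

context amalg begin

definition enc :: "('b set \<times> 'c set) set \<Rightarrow> ('b + 'c + 'i) list" where
  "enc S = code (SOME l. set l \<subseteq> carrier A1 \<times> carrier A2 \<and> sem l = S)"

lemma enc_inj: "inj_on enc Dsets"
proof -
  have "sem (decode (enc S)) = S" if "S \<in> Dsets" for S
  proof -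
    have "\<exists>l. set l \<subseteq> carrier A1 \<times> carrier A2 \<and> sem l = S" using that unfolding Dsets_def by auto
    hence "sem (SOME l. set l \<subseteq> carrier A1 \<times> carrier A2 \<and> sem l = S) = S" by (rule someI_ex[THEN conjunct2])
    thus ?thesis unfolding enc_def decode_code .
  qed
  thus ?thesis by (metis inj_onI)
qed

lemma final:
  "\<exists>(D :: (('b + 'c + 'i) list, 'i) sba) m1 m2.
     in_variety \<alpha> Ops D \<and> is_mono Ops A1 D m1 \<and> is_mono Ops A2 D m2 \<and>
     (\<forall>a\<in>carrier A0. m1 (i1 a) = m2 (i2 a)) \<and>
     (\<forall>x\<in>carrier A1. \<forall>y\<in>carrier A2. ba_le D (m1 x) (m2 y) \<longrightarrow>
        (\<exists>z\<in>carrier A0. ba_le A1 x (i1 z) \<and> ba_le A2 (i2 z) y)) \<and>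
     (\<forall>x\<in>carrier A2. \<forall>y\<in>carrier A1. ba_le D (m2 x) (m1 y) \<longrightarrow>
        (\<exists>z\<in>carrier A0. ba_le A2 x (i2 z) \<and> ba_le A1 (i1 z) y))"
proof (intro exI conjI ballI impI)
  have inj: "inj_on enc (carrier E)" using enc_inj by simp
  show "in_variety \<alpha> Ops (transport E enc)" using T_var[OF inj E_var] .
  have tm: "is_mono Ops E (transport E enc) enc" using T_mono[OF inj] .
  show "is_mono Ops A1 (transport E enc) (enc \<circ> R1)"
    using mono_comp[OF _ tm] R1_hom R1_inj unfolding is_mono_def by blast
  show "is_mono Ops A2 (transport E enc) (enc \<circ> R2)"
    using mono_comp[OF _ tm] R2_hom R2_inj unfolding is_mono_def by blast
  show "\<And>a. a \<in> carrier A0 \<Longrightarrow> (enc \<circ> R1) (i1 a) = (enc \<circ> R2) (i2 a)" using commute by simp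
  show "\<exists>z\<in>carrier A0. ba_le A1 x (i1 z) \<and> ba_le A2 (i2 z) y"
    if "x \<in> carrier A1" "y \<in> carrier A2" "ba_le (transport E enc) ((enc \<circ> R1) x) ((enc \<circ> R2) y)" for x y
    using super1[OF that(1,2)] that T_le[OF inj E_BA, of "R1 x" "R2 y"] R1_D R2_D by simp
  show "\<exists>z\<in>carrier A0. ba_le A2 x (i2 z) \<and> ba_le A1 (i1 z) y"
    if "x \<in> carrier A2" "y \<in> carrier A1" "ba_le (transport E enc) ((enc \<circ> R2) x) ((enc \<circ> R1) y)" for x y
    using super2[OF that(1,2)] that T_le[OF inj E_BA, of "R2 x" "R1 y"] R1_D R2_D by simp
qed

end

theorem general_sa:
  fixes \<alpha> :: "'i::wellorder" and Ops :: "'i opl set"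
  shows "superamalgamation \<alpha> Ops TYPE('a) TYPE('b) TYPE('c)"
  unfolding superamalgamation_def
proof (intro allI impI)
  fix A0 :: "('a,'i) sba" and A1 :: "('b,'i) sba" and A2 :: "('c,'i) sba" and i1 i2
  assume "in_variety \<alpha> Ops A0" "in_variety \<alpha> Ops A1" "in_variety \<alpha> Ops A2"
    "is_mono Ops A0 A1 i1" "is_mono Ops A0 A2 i2"
  then interpret amalg \<alpha> Ops A0 A1 A2 i1 i2 by (unfold_locales)
  show "\<exists>(D :: (('b + 'c + 'i) list, 'i) sba) m1 m2.
     in_variety \<alpha> Ops D \<and> is_mono Ops A1 D m1 \<and> is_mono Ops A2 D m2 \<and>
     (\<forall>a\<in>carrier A0. m1 (i1 a) = m2 (i2 a)) \<and>
     (\<forall>x\<in>carrier A1. \<forall>y\<in>carrier A2. ba_le D (m1 x) (m2 y) \<longrightarrow>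
        (\<exists>z\<in>carrier A0. ba_le A1 x (i1 z) \<and> ba_le A2 (i2 z) y)) \<and>
     (\<forall>x\<in>carrier A2. \<forall>y\<in>carrier A1. ba_le D (m2 x) (m1 y) \<longrightarrow>
        (\<exists>z\<in>carrier A0. ba_le A2 x (i2 z) \<and> ba_le A1 (i1 z) y))"
    by (rule final)
qed

theorem corollary6p8:
  fixes \<alpha> :: "'i::wellorder"
  assumes "\<exists>a b. a < b \<and> b < \<alpha>"
  shows "superamalgamation \<alpha> (ops_TA \<alpha>) TYPE('a) TYPE('b) TYPE('c)
       \<and> superamalgamation \<alpha> (ops_SA \<alpha>) TYPE('a) TYPE('b) TYPE('c)"
  using general_sa by blast


end
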